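(* For any temporal feedback graph $\mathcal{S}$ on $T$ rounds, the optimal value of the upper bound dual program (maximize $\sum_{t=1}^T\mu_t$ subject to $\sum_{t\in C_c}\mu_t^2\le 1$ for all $c\in[N]$ and $\mu_t\ge 0$ for all $t\in[T]$) equals $\mathsf{UB}(\mathcal{S})$, the optimal value of the upper bound program (minimize $\sum_{c=1}^N\sqrt{\sum_{t\in C_c}\lambda_{c,t}^2}$ subject to $\sum_{c=1}^N\lambda_{c,t}=1$ for all $t\in[T]$, $\lambda_{c,t}=0$ if $t\notin C_c$, $\lambda_{c,t}\ge0$).
   Context: A temporal feedback graph $\mathcal{S}$ is a collection of subsets $S_t\subseteq[T]\setminus\{t\}$, $t\in[T]$. A sequence of rounds $t_1,\dots,t_w$ is an order if $t_u\in S_{t_v}$ for all $u<v$; it is maximal if no super-sequence of it is an order. $C_1,\dots,C_N$ denote all maximal orders of $\mathcal{S}$. *)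

theory Defs
  imports Complex_Main "HOL-Library.Sublist"
begin

definition tfg :: "nat \<Rightarrow> (nat \<Rightarrow> nat set) \<Rightarrow> bool" where
  "tfg T S \<longleftrightarrow> (\<forall>t\<in>{1..T}. S t \<subseteq> {1..T} - {t})"

definition is_order :: "nat \<Rightarrow> (nat \<Rightarrow> nat set) \<Rightarrow> nat list \<Rightarrow> bool" where
  "is_order T S xs \<longleftrightarrow> set xs \<subseteq> {1..T} \<and>
     (\<forall>u v. u < v \<and> v < length xs \<longrightarrow> xs ! u \<in> S (xs ! v))"

definition is_maximal_order :: "nat \<Rightarrow> (nat \<Rightarrow> nat set) \<Rightarrow> nat list \<Rightarrow> bool" where
  "is_maximal_order T S xs \<longleftrightarrow> is_order T S xs \<and>
     \<not> (\<exists>ys. is_order T S ys \<and> subseq xs ys \<and> ys \<noteq> xs)"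

definition maximal_orders :: "nat \<Rightarrow> (nat \<Rightarrow> nat set) \<Rightarrow> nat list set" where
  "maximal_orders T S = {xs. is_maximal_order T S xs}"

definition UB :: "nat \<Rightarrow> (nat \<Rightarrow> nat set) \<Rightarrow> real" where
  "UB T S = Inf {(\<Sum>c\<in>maximal_orders T S. sqrt (\<Sum>t\<in>set c. (lam c t)\<^sup>2)) | lam.
      (\<forall>t\<in>{1..T}. (\<Sum>c\<in>maximal_orders T S. lam c t) = 1) \<and>
      (\<forall>c\<in>maximal_orders T S. \<forall>t\<in>{1..T}. t \<notin> set c \<longrightarrow> lam c t = 0) \<and>
      (\<forall>c\<in>maximal_orders T S. \<forall>t\<in>{1..T}. lam c t \<ge> 0)}"

definition UB_dual :: "nat \<Rightarrow> (nat \<Rightarrow> nat set) \<Rightarrow> real" where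
  "UB_dual T S = Sup {(\<Sum>t\<in>{1..T}. mu t) | mu.
      (\<forall>c\<in>maximal_orders T S. (\<Sum>t\<in>set c. (mu t)\<^sup>2) \<le> 1) \<and>
      (\<forall>t\<in>{1..T}. mu t \<ge> 0)}"

end

theory Submission
  imports Defs "HOL-Analysis.Analysis"
begin

lemma compact_Pi_UNIV:
  assumes "\<And>i. compact (S i)"
  shows "compact (Pi UNIV S :: ('a \<Rightarrow> 'b::topological_space) set)"
proof -
  have "compactin (product_topology (\<lambda>i. euclidean) UNIV) (PiE UNIV S)"
    using assms by (simp add: compactin_PiE)
  moreover have "PiE UNIV S = Pi UNIV S" by (simp add: PiE_def extensional_def)
  ultimately show ?thesis
    by (simp add: euclidean_product_topology)
qed

lemma cont_coord2: "continuous_on A (\<lambda>x::'a \<Rightarrow> 'b \<Rightarrow> 'c::topological_space. x c t)"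
  by (rule continuous_on_subset[OF continuous_on_product_then_coordinatewise[OF continuous_on_product_coordinates] subset_UNIV])


definition Jf :: "nat list set \<Rightarrow> (nat list \<Rightarrow> nat \<Rightarrow> real) \<Rightarrow> real" where
  "Jf M lam = (\<Sum>c\<in>M. sqrt (\<Sum>t\<in>set c. (lam c t)\<^sup>2))"

definition Feas :: "nat \<Rightarrow> nat list set \<Rightarrow> (nat list \<Rightarrow> nat \<Rightarrow> real) \<Rightarrow> bool" where
  "Feas T M lam \<longleftrightarrow> (\<forall>t\<in>{1..T}. (\<Sum>c\<in>M. lam c t) = 1) \<and>
      (\<forall>c\<in>M. \<forall>t\<in>{1..T}. t \<notin> set c \<longrightarrow> lam c t = 0) \<and>
      (\<forall>c\<in>M. \<forall>t\<in>{1..T}. lam c t \<ge> 0)"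

definition DF :: "nat \<Rightarrow> nat list set \<Rightarrow> (nat \<Rightarrow> real) \<Rightarrow> bool" where
  "DF T M mu \<longleftrightarrow> (\<forall>c\<in>M. (\<Sum>t\<in>set c. (mu t)\<^sup>2) \<le> 1) \<and> (\<forall>t\<in>{1..T}. mu t \<ge> 0)"

lemma L2_convex:
  assumes "0 \<le> s" "s \<le> 1"
  shows "sqrt (\<Sum>t\<in>A. ((1-s) * x t + s * y t)\<^sup>2) \<le> (1-s) * sqrt (\<Sum>t\<in>A. (x t)\<^sup>2) + s * sqrt (\<Sum>t\<in>A. (y t)\<^sup>2)"
  using L2_set_triangle_ineq[of "\<lambda>t. (1-s) * x t" "\<lambda>t. s * y t" A]
    L2_set_right_distrib[of "1-s" x A] L2_set_right_distrib[of s y A] assms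
  unfolding L2_set_def by simp

lemma small_le0:
  fixes x y :: real
  assumes "\<And>s. 0 < s \<Longrightarrow> s \<le> 1 \<Longrightarrow> x \<le> s * y"
  shows "x \<le> 0"
proof (rule ccontr)
  assume "\<not> x \<le> 0"
  hence x: "x > 0" by simp
  have "x \<le> y" using assms[of 1] by simp
  hence y: "y > 0" using x by simp
  define s where "s = min 1 (x/(2 * y))"
  have "0 < s" "s \<le> 1" using x y by (auto simp: s_def)
  hence "x \<le> s * y" using assms by blast
  also have "\<dots> \<le> (x/(2 * y)) * y" using y by (intro mult_right_mono) (auto simp: s_def)
  also have "\<dots> = x/2" using y by simp
  finally show False using x by simp
qed

lemma sq_expand:
  fixes a d :: "nat \<Rightarrow> real"
  shows "(\<Sum>t\<in>I. (a t - s * d t)\<^sup>2) = (\<Sum>t\<in>I. (a t)\<^sup>2) - 2 * s * (\<Sum>t\<in>I. a t * d t) + s\<^sup>2 * (\<Sum>t\<in>I. (d t)\<^sup>2)"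
proof -
  have "(\<Sum>t\<in>I. (a t - s * d t)\<^sup>2) = (\<Sum>t\<in>I. (a t)\<^sup>2 - 2 * s * (a t * d t) + s\<^sup>2 * (d t)\<^sup>2)"
    by (rule sum.cong) (auto simp: power2_eq_square algebra_simps)
  also have "\<dots> = (\<Sum>t\<in>I. (a t)\<^sup>2) - 2 * s * (\<Sum>t\<in>I. a t * d t) + s\<^sup>2 * (\<Sum>t\<in>I. (d t)\<^sup>2)"
    by (simp add: sum.distrib sum_subtractf sum_distrib_left)
  finally show ?thesis .
qed

locale dual_ctx =
  fixes T :: nat and M :: "nat list set"
  assumes finM: "finite M"
    and setM: "\<And>c. c \<in> M \<Longrightarrow> set c \<subseteq> {1..T}"
    and cov: "\<And>t. t \<in> {1..T} \<Longrightarrow> \<exists>c\<in>M. t \<in> set c"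
begin

lemma weak:
  assumes F: "Feas T M lam" and D: "DF T M mu"
  shows "(\<Sum>t\<in>{1..T}. mu t) \<le> Jf M lam"
proof -
  have "(\<Sum>t\<in>{1..T}. mu t) = (\<Sum>t\<in>{1..T}. mu t * (\<Sum>c\<in>M. lam c t))"
    using F by (auto simp: Feas_def intro!: sum.cong)
  also have "\<dots> = (\<Sum>c\<in>M. \<Sum>t\<in>{1..T}. mu t * lam c t)"
    unfolding sum_distrib_left by (rule sum.swap)
  also have "\<dots> = (\<Sum>c\<in>M. \<Sum>t\<in>set c. mu t * lam c t)"
  proof (rule sum.cong[OF refl])
    fix c assume c: "c \<in> M"
    show "(\<Sum>t\<in>{1..T}. mu t * lam c t) = (\<Sum>t\<in>set c. mu t * lam c t)"
      by (rule sum.mono_neutral_right) (use F c setM in \<open>auto simp: Feas_def\<close>)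
  qed
  also have "\<dots> \<le> Jf M lam"
    unfolding Jf_def
  proof (rule sum_mono)
    fix c assume c: "c \<in> M"
    have "(\<Sum>t\<in>set c. mu t * lam c t) \<le> (\<Sum>t\<in>set c. \<bar>mu t\<bar> * \<bar>lam c t\<bar>)"
      by (rule sum_mono) (metis abs_ge_self abs_mult)
    also have "\<dots> \<le> L2_set mu (set c) * L2_set (lam c) (set c)"
      by (rule L2_set_mult_ineq)
    also have "\<dots> \<le> 1 * L2_set (lam c) (set c)"
      using D c by (intro mult_right_mono) (auto simp: DF_def L2_set_def sum_nonneg)
    finally show "(\<Sum>t\<in>set c. mu t * lam c t) \<le> sqrt (\<Sum>t\<in>set c. (lam c t)\<^sup>2)"
      by (simp add: L2_set_def)
  qed
  finally show ?thesis .
qed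

lemma feas_ex: "\<exists>lam. Feas T M lam"
proof -
  define p where "p t = (SOME c. c \<in> M \<and> t \<in> set c)" for t
  have p: "p t \<in> M \<and> t \<in> set (p t)" if "t \<in> {1..T}" for t
    using cov[OF that] unfolding p_def by (metis (mono_tags, lifting) someI_ex)
  define lam where "lam c t = (if c = p t then 1 else 0::real)" for c t
  have "Feas T M lam"
    unfolding Feas_def
  proof (intro conjI ballI impI)
    fix t assume t: "t \<in> {1..T}"
    show "(\<Sum>c\<in>M. lam c t) = 1"
      unfolding lam_def using p[OF t] finM by (simp add: sum.delta')
  next
    fix c t assume "c \<in> M" "t \<in> {1..T}" "t \<notin> set c"
    thus "lam c t = 0" using p unfolding lam_def by auto
  next
    fix c t show "0 \<le> lam c t" by (simp add: lam_def)
  qed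
  thus ?thesis by blast
qed

end

context dual_ctx begin

lemma strong:
  assumes r: "0 < r" and less: "\<And>lam. Feas T M lam \<Longrightarrow> r < Jf M lam"
  shows "\<exists>mu. DF T M mu \<and> r \<le> (\<Sum>t\<in>{1..T}. mu t)"
proof -
  define I where "I = {1..T}"
  define box :: "(nat list \<Rightarrow> nat \<Rightarrow> real) set" where
    "box = Pi UNIV (\<lambda>c. Pi UNIV (\<lambda>t. if c \<in> M \<and> t \<in> set c then {0..r} else {0}))"
  define Lr where "Lr = box \<inter> {lam. Jf M lam \<le> r}"
  define A where "A lam t = (\<Sum>c\<in>M. lam c t)" for lam :: "nat list \<Rightarrow> nat \<Rightarrow> real" and t
  define g where "g lam = (\<Sum>t\<in>I. (1 - A lam t)\<^sup>2)" for lam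
  have box_iff: "lam \<in> box \<longleftrightarrow> (\<forall>c t. lam c t \<in> (if c \<in> M \<and> t \<in> set c then {0..r} else {0}))" for lam
    by (simp add: box_def Pi_iff)
  have "compact box" unfolding box_def
    by (intro compact_Pi_UNIV) (auto simp: compact_Icc)
  moreover have "closed {lam. Jf M lam \<le> r}"
    unfolding Jf_def by (intro closed_Collect_le continuous_intros cont_coord2)
  ultimately have cLr: "compact Lr" unfolding Lr_def by (rule compact_Int_closed)
  have zero_Lr: "(\<lambda>c t. 0) \<in> Lr" using r by (auto simp: Lr_def box_iff Jf_def)
  have "continuous_on Lr g" unfolding g_def A_def
    by (intro continuous_intros cont_coord2)
  then obtain ls where ls: "ls \<in> Lr" and lsmin: "\<And>lam. lam \<in> Lr \<Longrightarrow> g ls \<le> g lam"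
    using continuous_attains_inf[OF cLr] zero_Lr by blast
  define a where "a t = 1 - A ls t" for t
  define \<beta> where "\<beta> = (\<Sum>t\<in>I. a t * A ls t)"
  have sep: "(\<Sum>t\<in>I. a t * A lam t) \<le> \<beta>" if lam: "lam \<in> Lr" for lam
  proof -
    define d where "d t = A lam t - A ls t" for t
    have "(\<Sum>t\<in>I. a t * d t) \<le> 0"
    proof (rule small_le0)
      fix s :: real assume s: "0 < s" "s \<le> 1"
      define m where "m c t = (1-s) * ls c t + s * lam c t" for c t
      have "m \<in> box" using ls lam s unfolding Lr_def box_iff m_def
      proof (intro allI)
        fix c t
        assume h: "ls \<in> box \<inter> {lam. Jf M lam \<le> r}" "lam \<in> box \<inter> {lam. Jf M lam \<le> r}"
        have "ls c t \<in> (if c \<in> M \<and> t \<in> set c then {0..r} else {0})"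
             "lam c t \<in> (if c \<in> M \<and> t \<in> set c then {0..r} else {0})"
          using h by (auto simp: box_iff)
        thus "(1-s) * ls c t + s * lam c t \<in> (if c \<in> M \<and> t \<in> set c then {0..r} else {0})"
          using s by (auto split: if_splits simp: convex_bound_le)
      qed
      moreover have "Jf M m \<le> r"
      proof -
        have "Jf M m \<le> (\<Sum>c\<in>M. (1-s) * sqrt (\<Sum>t\<in>set c. (ls c t)\<^sup>2) + s * sqrt (\<Sum>t\<in>set c. (lam c t)\<^sup>2))"
          unfolding Jf_def m_def using s by (intro sum_mono L2_convex) auto
        also have "\<dots> = (1-s) * Jf M ls + s * Jf M lam"
          by (simp add: Jf_def sum.distrib sum_distrib_left)
        also have "\<dots> \<le> (1-s) * r + s * r"
          using ls lam s unfolding Lr_def by (intro add_mono mult_left_mono) auto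
        finally show ?thesis by (simp add: algebra_simps)
      qed
      ultimately have "m \<in> Lr" by (simp add: Lr_def)
      hence "g ls \<le> g m" by (rule lsmin)
      moreover have "A m t = A ls t + s * d t" for t
        by (simp add: A_def m_def d_def sum.distrib sum_distrib_left algebra_simps sum_subtractf)
      hence "g m = (\<Sum>t\<in>I. (a t - s * d t)\<^sup>2)"
        unfolding g_def a_def by (intro sum.cong) (auto simp: algebra_simps)
      ultimately have "g ls \<le> g ls - 2 * s * (\<Sum>t\<in>I. a t * d t) + s\<^sup>2 * (\<Sum>t\<in>I. (d t)\<^sup>2)"
        by (simp add: sq_expand g_def a_def)
      hence "2 * s * (\<Sum>t\<in>I. a t * d t) \<le> s * (s * (\<Sum>t\<in>I. (d t)\<^sup>2))"
        by (simp add: power2_eq_square algebra_simps)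
      hence "2 * (\<Sum>t\<in>I. a t * d t) \<le> s * (\<Sum>t\<in>I. (d t)\<^sup>2)"
        using s by (simp add: mult.assoc)
      thus "(\<Sum>t\<in>I. a t * d t) \<le> s * ((\<Sum>t\<in>I. (d t)\<^sup>2) / 2)" by simp
    qed
    thus ?thesis
      by (simp add: d_def \<beta>_def algebra_simps sum_subtractf)
  qed

  have finI: "finite I" by (simp add: I_def)
  have lsbox: "\<forall>c t. ls c t \<in> (if c \<in> M \<and> t \<in> set c then {0..r} else {0})"
    using ls by (simp add: Lr_def box_iff)
  have box0: "ls c t = 0" if "\<not> (c \<in> M \<and> t \<in> set c)" for c t
    using lsbox[rule_format, of c t] that by simp
  have boxr: "0 \<le> ls c t" for c t
    using lsbox[rule_format, of c t] r by (auto split: if_splits)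
  have "\<exists>t\<in>I. a t \<noteq> 0"
  proof (rule ccontr)
    assume "\<not> (\<exists>t\<in>I. a t \<noteq> 0)"
    hence "\<forall>t\<in>I. A ls t = 1" by (auto simp: a_def)
    hence "Feas T M ls" unfolding Feas_def using box0 boxr by (auto simp: A_def I_def)
    hence "r < Jf M ls" by (rule less)
    thus False using ls by (simp add: Lr_def)
  qed
  then obtain t0 where t0: "t0 \<in> I" "a t0 \<noteq> 0" by blast
  have sq_pos: "0 < (\<Sum>t\<in>I. (a t)\<^sup>2)"
    by (rule sum_pos2[OF finI t0(1)]) (use t0 in auto)
  have sumA: "(\<Sum>t\<in>I. a t) = \<beta> + (\<Sum>t\<in>I. (a t)\<^sup>2)"
    unfolding \<beta>_def sum.distrib[symmetric]
    by (rule sum.cong) (auto simp: a_def power2_eq_square algebra_simps)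
  have "\<beta> \<ge> 0" using sep[OF zero_Lr] by (simp add: A_def)
  have "\<beta> \<noteq> 0"
  proof
    assume b0: "\<beta> = 0"
    have "a t \<le> 0" if t: "t \<in> I" for t
    proof -
      obtain c where c: "c \<in> M" "t \<in> set c" using cov t by (auto simp: I_def)
      define lam where "lam c' t' = (if c' = c \<and> t' = t then r else 0)" for c' t'
      have "lam \<in> box" using c r by (auto simp: box_iff lam_def)
      moreover have "Jf M lam \<le> r"
      proof -
        have "Jf M lam = (\<Sum>c'\<in>M. if c' = c then r else 0)"
          unfolding Jf_def
        proof (rule sum.cong[OF refl])
          fix c' assume "c' \<in> M"
          have "(\<Sum>t'\<in>set c'. (lam c' t')\<^sup>2) = (\<Sum>t'\<in>set c'. if c' = c \<and> t' = t then r\<^sup>2 else 0)"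
            by (rule sum.cong) (auto simp: lam_def)
          also have "\<dots> = (if c' = c then r\<^sup>2 else 0)"
            using c by (auto simp: sum.delta)
          finally show "sqrt (\<Sum>t'\<in>set c'. (lam c' t')\<^sup>2) = (if c' = c then r else 0)"
            using r by simp
        qed
        also have "\<dots> = r" using c finM by (simp add: sum.delta)
        finally show ?thesis by simp
      qed
      ultimately have "lam \<in> Lr" by (simp add: Lr_def)
      hence "(\<Sum>t'\<in>I. a t' * A lam t') \<le> \<beta>" by (rule sep)
      moreover have "A lam t' = (if t' = t then r else 0)" for t'
        unfolding A_def lam_def using c finM by (simp add: sum.delta)
      ultimately have "a t * r \<le> 0" using b0 t finI by (simp add: sum.delta if_distrib cong: if_cong)
      thus ?thesis using r by (simp add: mult_le_0_iff)
    qed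
    hence "(\<Sum>t\<in>I. a t) \<le> 0" by (simp add: sum_nonpos)
    thus False using sumA b0 sq_pos by simp
  qed
  hence bpos: "\<beta> > 0" using \<open>\<beta> \<ge> 0\<close> by simp
  define \<nu> where "\<nu> t = r * a t / \<beta>" for t
  define mu where "mu t = max 0 (\<nu> t)" for t
  have "r \<le> (\<Sum>t\<in>I. \<nu> t)"
  proof -
    have "(\<Sum>t\<in>I. \<nu> t) = r * (\<Sum>t\<in>I. a t) / \<beta>"
      by (simp add: \<nu>_def sum_divide_distrib sum_distrib_left)
    moreover have "r * \<beta> \<le> r * (\<Sum>t\<in>I. a t)" using sumA sq_pos r by simp
    ultimately show ?thesis using bpos by (simp add: pos_le_divide_eq)
  qed
  also have "\<dots> \<le> (\<Sum>t\<in>I. mu t)" by (intro sum_mono) (simp add: mu_def)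
  finally have rle: "r \<le> (\<Sum>t\<in>I. mu t)" .
  have numu: "\<nu> t * mu t = (mu t)\<^sup>2" for t by (simp add: mu_def max_def power2_eq_square)
  have "DF T M mu"
    unfolding DF_def
  proof (intro conjI ballI)
    fix t show "0 \<le> mu t" by (simp add: mu_def)
  next
    fix c assume c: "c \<in> M"
    define q2 where "q2 = (\<Sum>t\<in>set c. (mu t)\<^sup>2)"
    define q where "q = sqrt q2"
    show "(\<Sum>t\<in>set c. (mu t)\<^sup>2) \<le> 1"
    proof (rule ccontr)
      assume "\<not> (\<Sum>t\<in>set c. (mu t)\<^sup>2) \<le> 1"
      hence q2g: "q2 > 1" by (simp add: q2_def)
      hence qg: "q > 1" by (simp add: q_def)
      have qq: "q\<^sup>2 = q2" using q2g by (simp add: q_def)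
      have mule: "mu t \<le> q" if "t \<in> set c" for t
      proof -
        have "(mu t)\<^sup>2 \<le> q2" unfolding q2_def
          by (rule member_le_sum) (use that in auto)
        hence "sqrt ((mu t)\<^sup>2) \<le> q" unfolding q_def by (rule real_sqrt_le_mono)
        thus ?thesis by (simp add: mu_def)
      qed
      define lam where "lam c' t = (if c' = c \<and> t \<in> set c then r * mu t / q else 0)" for c' t
      have "lam \<in> box"
        unfolding box_iff
      proof (intro allI)
        fix c' t
        show "lam c' t \<in> (if c' \<in> M \<and> t \<in> set c' then {0..r} else {0})"
        proof (cases "c' = c \<and> t \<in> set c")
          case True
          have "0 \<le> mu t" by (simp add: mu_def)
          moreover have "r * mu t / q \<le> r"
            using mule[of t] True qg r by (simp add: pos_divide_le_eq mult_left_le)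
          ultimately show ?thesis using True c r qg by (simp add: lam_def)
        qed (use r in \<open>auto simp: lam_def\<close>)
      qed
      moreover have "Jf M lam \<le> r"
      proof -
        have "Jf M lam = (\<Sum>c'\<in>M. if c' = c then r else 0)"
          unfolding Jf_def
        proof (rule sum.cong[OF refl])
          fix c' assume "c' \<in> M"
          show "sqrt (\<Sum>t\<in>set c'. (lam c' t)\<^sup>2) = (if c' = c then r else 0)"
          proof (cases "c' = c")
            case True
            have "(\<Sum>t\<in>set c'. (lam c' t)\<^sup>2) = (\<Sum>t\<in>set c. (r / q)\<^sup>2 * (mu t)\<^sup>2)"
              using True by (intro sum.cong) (auto simp: lam_def power_divide power_mult_distrib)
            also have "\<dots> = (r/q)\<^sup>2 * q2" by (simp add: q2_def sum_distrib_left)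
            also have "\<dots> = r\<^sup>2" unfolding qq[symmetric] using qg by (simp add: power_divide)
            finally show ?thesis using True r by simp
          qed (auto simp: lam_def)
        qed
        also have "\<dots> = r" using c finM by (simp add: sum.delta)
        finally show ?thesis by simp
      qed
      ultimately have "lam \<in> Lr" by (simp add: Lr_def)
      hence "(\<Sum>t\<in>I. a t * A lam t) \<le> \<beta>" by (rule sep)
      moreover have "(\<Sum>t\<in>I. a t * A lam t) = \<beta> * q"
      proof -
        have Al: "A lam t = (if t \<in> set c then r * mu t / q else 0)" for t
          unfolding A_def lam_def using c finM by (simp add: sum.delta)
        have "(\<Sum>t\<in>I. a t * A lam t) = (\<Sum>t\<in>I. if t \<in> set c then a t * (r * mu t / q) else 0)"
          by (intro sum.cong) (auto simp: Al)
        also have "\<dots> = (\<Sum>t\<in>set c. a t * (r * mu t / q))"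
          using setM[OF c] finI by (simp add: sum.inter_restrict[symmetric] I_def Int_absorb1)
        also have "\<dots> = (\<Sum>t\<in>set c. (\<beta> / q) * (\<nu> t * mu t))"
          using bpos qg by (intro sum.cong) (auto simp: \<nu>_def field_simps)
        also have "\<dots> = (\<beta> / q) * q2" by (simp add: numu q2_def sum_distrib_left)
        also have "\<dots> = \<beta> * q" using qq qg by (simp add: power2_eq_square field_simps)
        finally show ?thesis .
      qed
      ultimately have "\<beta> * q \<le> \<beta> * 1" by simp
      hence "q \<le> 1" using bpos by simp
      thus False using qg by simp
    qed
  qed
  thus ?thesis using rle unfolding I_def by blast
qed

end

context dual_ctx begin

lemma dual_eq:
  "Sup {(\<Sum>t\<in>{1..T}. mu t) | mu. DF T M mu} = Inf {Jf M lam | lam. Feas T M lam}"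
  (is "Sup ?D = Inf ?P")
proof -
  obtain lam0 where lam0: "Feas T M lam0" using feas_ex by blast
  have D0: "0 \<in> ?D"
  proof -
    have "DF T M (\<lambda>_. 0)" by (simp add: DF_def)
    thus ?thesis by force
  qed
  hence Dne: "?D \<noteq> {}" by blast
  have Pne: "?P \<noteq> {}" using lam0 by blast
  have bddD: "bdd_above ?D"
  proof (rule bdd_aboveI[of _ "Jf M lam0"])
    fix x assume "x \<in> ?D"
    then obtain mu where "DF T M mu" "x = (\<Sum>t\<in>{1..T}. mu t)" by blast
    thus "x \<le> Jf M lam0" using weak[OF lam0] by simp
  qed
  have Jnn: "0 \<le> Jf M lam" for lam by (simp add: Jf_def sum_nonneg)
  have bddP: "bdd_below ?P"
    by (rule bdd_belowI[of _ 0]) (auto simp: Jnn)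
  have le1: "Sup ?D \<le> Inf ?P"
  proof (rule cInf_greatest[OF Pne])
    fix x assume "x \<in> ?P"
    then obtain lam where lam: "Feas T M lam" "x = Jf M lam" by blast
    show "Sup ?D \<le> x"
    proof (rule cSup_least[OF Dne])
      fix y assume "y \<in> ?D"
      then obtain mu where "DF T M mu" "y = (\<Sum>t\<in>{1..T}. mu t)" by blast
      thus "y \<le> x" using weak[OF lam(1)] lam(2) by simp
    qed
  qed
  have le2: "Inf ?P \<le> Sup ?D"
  proof (cases "Inf ?P \<le> 0")
    case True
    have "0 \<le> Sup ?D" by (rule cSup_upper[OF D0 bddD])
    thus ?thesis using True by linarith
  next
    case False
    show ?thesis
    proof (rule dense_le_bounded[of 0])
      show "0 < Inf ?P" using False by simp
    next
      fix w assume w: "0 < w" "w < Inf ?P"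
      have "w < Jf M lam" if "Feas T M lam" for lam
      proof -
        have "Inf ?P \<le> Jf M lam" by (rule cInf_lower) (use that bddP in auto)
        thus ?thesis using w by simp
      qed
      then obtain mu where mu: "DF T M mu" "w \<le> (\<Sum>t\<in>{1..T}. mu t)"
        using strong[OF w(1)] by blast
      have "(\<Sum>t\<in>{1..T}. mu t) \<le> Sup ?D" by (rule cSup_upper) (use mu bddD in auto)
      thus "w \<le> Sup ?D" using mu by simp
    qed
  qed
  show ?thesis using le1 le2 by simp
qed

end

lemma order_distinct:
  assumes tfg: "tfg T S" and o: "is_order T S xs"
  shows "distinct xs"
  unfolding distinct_conv_nth
proof (intro allI impI)
  fix i j assume ij: "i < length xs" "j < length xs" "i \<noteq> j"
  have main: "xs ! u \<noteq> xs ! v" if "u < v" "v < length xs" for u v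
  proof -
    have "xs ! u \<in> S (xs ! v)" using o that by (simp add: is_order_def)
    moreover have "xs ! v \<in> set xs" using that by simp
    hence "xs ! v \<in> {1..T}" using o by (auto simp: is_order_def)
    ultimately show ?thesis using tfg by (auto simp: tfg_def)
  qed
  show "xs ! i \<noteq> xs ! j"
    using ij main[of i j] main[of j i] by (cases "i < j") auto
qed

lemma finite_orders:
  assumes tfg: "tfg T S"
  shows "finite {xs. is_order T S xs}"
proof (rule finite_subset[OF _ finite_lists_length_le[of "{1..T}" T]])
  show "{xs. is_order T S xs} \<subseteq> {xs. set xs \<subseteq> {1..T} \<and> length xs \<le> T}"
  proof
    fix xs assume "xs \<in> {xs. is_order T S xs}"
    hence o: "is_order T S xs" by simp
    have "length xs = card (set xs)" using order_distinct[OF tfg o] by (simp add: distinct_card)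
    also have "\<dots> \<le> card {1..T}" using o by (intro card_mono) (auto simp: is_order_def)
    finally show "xs \<in> {xs. set xs \<subseteq> {1..T} \<and> length xs \<le> T}" using o by (simp add: is_order_def)
  qed
qed simp

lemma cover:
  assumes tfg: "tfg T S" and t: "t \<in> {1..T}"
  shows "\<exists>c\<in>maximal_orders T S. t \<in> set c"
proof -
  define Os where "Os = {ys. is_order T S ys \<and> t \<in> set ys}"
  have fO: "finite Os" unfolding Os_def by (rule finite_subset[OF _ finite_orders[OF tfg]]) auto
  have "[t] \<in> Os" using t by (simp add: Os_def is_order_def)
  hence ne: "length ` Os \<noteq> {}" by blast
  have "Max (length ` Os) \<in> length ` Os" using fO ne by (intro Max_in) auto
  then obtain ys where ys: "ys \<in> Os" "length ys = Max (length ` Os)" by auto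
  have "is_maximal_order T S ys"
    unfolding is_maximal_order_def
  proof (intro conjI notI)
    show "is_order T S ys" using ys by (simp add: Os_def)
  next
    assume "\<exists>zs. is_order T S zs \<and> subseq ys zs \<and> zs \<noteq> ys"
    then obtain zs where zs: "is_order T S zs" "subseq ys zs" "zs \<noteq> ys" by blast
    have "t \<in> set zs" using list_emb_set[OF zs(2)] ys(1) by (auto simp: Os_def)
    hence "zs \<in> Os" using zs by (simp add: Os_def)
    hence "length zs \<le> length ys" using ys fO by simp
    moreover have "length ys \<le> length zs" by (rule list_emb_length[OF zs(2)])
    ultimately have "zs = ys" using subseq_same_length[OF zs(2)] by simp
    thus False using zs by simp
  qed
  thus ?thesis using ys by (auto simp: maximal_orders_def Os_def)
qed

theorem theorem2:
  fixes T :: nat and S :: "nat \<Rightarrow> nat set"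
  assumes "tfg T S"
  shows "UB_dual T S = UB T S"
proof -
  interpret dual_ctx T "maximal_orders T S"
  proof
    show "finite (maximal_orders T S)"
      by (rule finite_subset[OF _ finite_orders[OF assms]]) (auto simp: maximal_orders_def is_maximal_order_def)
  next
    fix c assume "c \<in> maximal_orders T S"
    thus "set c \<subseteq> {1..T}" by (simp add: maximal_orders_def is_maximal_order_def is_order_def)
  next
    fix t assume "t \<in> {1..T}"
    thus "\<exists>c\<in>maximal_orders T S. t \<in> set c" by (rule cover[OF assms])
  qed
  show ?thesis
    using dual_eq unfolding UB_def UB_dual_def DF_def Feas_def Jf_def .
qed

end
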